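(* Let $U,V$ be Banach spaces with norms $\|\cdot\|_U,\|\cdot\|_V$, and for each $\varepsilon>0$ let $\bar u_\varepsilon\in U$ and $F_\varepsilon\in C^1(U;V)$ be given with $\|F_\varepsilon(\bar u_\varepsilon)\|_V\to0$ as $\varepsilon\to0$. Let $u_0\in U$ be such that there exist $\varepsilon_0>0$ and $c>0$ with: for all $\varepsilon\in(0,\varepsilon_0]$, $F'_\varepsilon(u_0)$ is Fredholm of index zero from $U$ into $V$ and $\|F'_\varepsilon(u_0)u\|_V\ge c\|u\|_U$ for all $u\in U$. Let $\|\cdot\|$ be another norm on $U$ such that (a) $d:=\sup\{\|u\|:\ u\in U,\ \|u\|_U\le1\}<\infty$; (b) $\|\bar u_\varepsilon-u_0\|\to0$ as $\varepsilon\to0$; (c) $\sup_{\|v\|_U\le1}\|(F'_\varepsilon(u_0+u)-F'_\varepsilon(u_0))v\|_V\to0$ as $\varepsilon+\|u\|\to0$. Then there exist $\varepsilon_1\in(0,\varepsilon_0]$ and $\delta>0$ such that for every $\varepsilon\in(0,\varepsilon_1]$ there is exactly one solution $u=u_\varepsilon$ of $F_\varepsilon(u)=0$ with $\|u-u_0\|\le\delta$, and $$\|u_\varepsilon-u_0\|\le\|\bar u_\varepsilon-u_0\|+\frac{3d}{c}\|F_\varepsilon(\bar u_\varepsilon)\|_V.$$ *)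

theory Defs
  imports "HOL-Analysis.Analysis"
begin

definition is_norm :: "('a::real_vector \<Rightarrow> real) \<Rightarrow> bool" where
  "is_norm N \<longleftrightarrow>
     (\<forall>x. 0 \<le> N x) \<and> (\<forall>x. N x = 0 \<longleftrightarrow> x = 0) \<and>
     (\<forall>x y. N (x + y) \<le> N x + N y) \<and> (\<forall>a x. N (a *\<^sub>R x) = \<bar>a\<bar> * N x)"

definition fredholm :: "('a::real_normed_vector \<Rightarrow> 'b::real_normed_vector) \<Rightarrow> bool" where
  "fredholm T \<longleftrightarrow> bounded_linear T \<and>
     (\<exists>K. finite K \<and> span K = {x. T x = 0}) \<and>
     closed (range T) \<and>
     (\<exists>C. finite C \<and> span (range T \<union> C) = UNIV)"

definition nullity :: "('a::real_normed_vector \<Rightarrow> 'b::real_normed_vector) \<Rightarrow> nat" where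
  "nullity T = dim {x. T x = 0}"

text \<open>Codimension of the range: dimension of the quotient V / range T, i.e. the
  least number of vectors which together with the range span the whole space.\<close>
definition codim_range :: "('a::real_normed_vector \<Rightarrow> 'b::real_normed_vector) \<Rightarrow> nat" where
  "codim_range T = (LEAST n. \<exists>C. finite C \<and> card C = n \<and> span (range T \<union> C) = UNIV)"

definition fredholm_index_zero :: "('a::real_normed_vector \<Rightarrow> 'b::real_normed_vector) \<Rightarrow> bool" where
  "fredholm_index_zero T \<longleftrightarrow> fredholm T \<and> int (nullity T) - int (codim_range T) = 0"

end

theory Submission
  imports Defs
begin

lemma surj_lemma:
  fixes T :: "'u::real_normed_vector \<Rightarrow>\<^sub>L 'v::real_normed_vector"
  assumes fz: "fredholm_index_zero (blinfun_apply T)"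
    and low: "\<And>u. norm (T u) \<ge> c * norm u" and c: "c > 0"
  shows "surj (blinfun_apply T)"
proof -
  have ker: "{x. T x = 0} = {0}"
  proof safe
    fix x assume "T x = 0"
    with low[of x] have "c * norm x \<le> 0" by simp
    with c have "norm x \<le> 0" by (simp add: mult_le_0_iff)
    then show "x = 0" by simp
  qed simp
  have "nullity (blinfun_apply T) = 0" unfolding nullity_def ker by (rule real_vector.dim_unique[of "{}"]) (auto simp: real_vector.dependent_def)
  with fz have cz: "codim_range (blinfun_apply T) = 0" unfolding fredholm_index_zero_def by simp
  from fz obtain C where C: "finite C" "span (range T \<union> C) = UNIV"
    unfolding fredholm_index_zero_def fredholm_def by blast
  have "\<exists>C. finite C \<and> card C = codim_range (blinfun_apply T) \<and> span (range T \<union> C) = UNIV"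
    unfolding codim_range_def
    by (rule LeastI_ex) (use C in blast)
  then obtain C0 where "finite C0" "card C0 = 0" "span (range T \<union> C0) = UNIV" using cz by auto
  then have "span (range T) = UNIV" by simp
  moreover have "span (range T) = range T"
    using span_linear_image[of "blinfun_apply T" UNIV] by (simp add: bounded_linear.linear[OF blinfun.bounded_linear_right])
  ultimately show ?thesis by simp
qed

lemma core:
  fixes f :: "'u::banach \<Rightarrow> 'v::banach" and f' :: "'u \<Rightarrow> 'u \<Rightarrow>\<^sub>L 'v" and A :: "'u \<Rightarrow>\<^sub>L 'v"
  assumes deriv: "\<And>u. (f has_derivative blinfun_apply (f' u)) (at u)"
    and surj: "surj (blinfun_apply A)"
    and low: "\<And>u. norm (A u) \<ge> c * norm u" and c: "c > 0"
    and cvx: "convex M"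
    and close: "\<And>w. w \<in> M \<Longrightarrow> norm (f' w - A) \<le> c/3"
    and ball: "cball ub r \<subseteq> M" and r: "r = 3 * norm (f ub) / (2*c)"
  shows "(\<exists>x \<in> cball ub r. f x = 0) \<and> (\<forall>x y. x\<in>M \<longrightarrow> y\<in>M \<longrightarrow> f x = 0 \<longrightarrow> f y = 0 \<longrightarrow> x = y)"
proof -
  have mvt: "norm (f x - f y - A (x - y)) \<le> c/3 * norm (x-y)" if "x \<in> M" "y \<in> M" for x y
  proof -
    have "norm ((\<lambda>w. f w - A w) x - (\<lambda>w. f w - A w) y) \<le> c/3 * norm (x-y)"
    proof (rule differentiable_bound[OF cvx, where f' = "\<lambda>w. blinfun_apply (f' w - A)"])
      fix w assume "w \<in> M"
      have "((\<lambda>w. f w - A w) has_derivative (\<lambda>h. f' w h - A h)) (at w)"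
        by (intro has_derivative_diff deriv bounded_linear_imp_has_derivative blinfun.bounded_linear_right)
      moreover have "(\<lambda>h. f' w h - A h) = blinfun_apply (f' w - A)"
        by (rule ext) (simp add: blinfun.diff_left)
      ultimately show "((\<lambda>w. f w - A w) has_derivative blinfun_apply (f' w - A)) (at w within M)"
        by (metis has_derivative_at_withinI)
      show "onorm (blinfun_apply (f' w - A)) \<le> c/3"
        using close[OF \<open>w \<in> M\<close>] by (simp add: norm_blinfun.rep_eq)
    qed (use that in auto)
    then show ?thesis by (simp add: blinfun.diff_right algebra_simps)
  qed
  define Ai where "Ai = inv (blinfun_apply A)"
  have AAi: "A (Ai y) = y" for y unfolding Ai_def by (rule surj_f_inv_f[OF surj])
  have Aibd: "norm (Ai y) \<le> norm y / c" for y
    using low[of "Ai y"] c by (simp add: AAi field_simps)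
  define G where "G x = x - Ai (f x)" for x
  have Gl: "norm (G x - G y) \<le> 1/3 * norm (x - y)" if "x \<in> M" "y \<in> M" for x y
  proof -
    have "A (G x - G y) = - (f x - f y - A (x - y))"
      by (simp add: G_def blinfun.diff_right blinfun.add_right AAi algebra_simps)
    then have "c * norm (G x - G y) \<le> c/3 * norm (x-y)"
      using low[of "G x - G y"] mvt[OF that] by (metis norm_minus_cancel order_trans)
    then show ?thesis using c by (simp add: field_simps)
  qed
  have r0: "r \<ge> 0" using r c by simp
  have "\<exists>!x\<in>cball ub r. G x = x"
  proof (rule Banach_fix)
    show "complete (cball ub r)" by (simp add: complete_eq_closed)
    show "cball ub r \<noteq> {}" using r0 by simp
    show "G ` cball ub r \<subseteq> cball ub r"
    proof safe
      fix x assume x: "x \<in> cball ub r"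
      have ub: "ub \<in> cball ub r" using r0 by simp
      have "norm (G x - ub) \<le> norm (G x - G ub) + norm (G ub - ub)"
        using norm_triangle_ineq[of "G x - G ub" "G ub - ub"] by simp
      also have "norm (G ub - ub) \<le> norm (f ub) / c"
        using Aibd[of "f ub"] by (simp add: G_def)
      also have "norm (G x - G ub) \<le> 1/3 * norm (x - ub)"
        using Gl[of x ub] x ub ball by (meson subsetD)
      also have "norm (x - ub) \<le> r" using x by (simp add: dist_norm norm_minus_commute)
      finally have "norm (G x - ub) \<le> 1/3 * r + norm (f ub) / c" by simp
      also have "\<dots> = r" using r c by (simp add: field_simps)
      finally show "G x \<in> cball ub r" by (simp add: dist_norm norm_minus_commute)
    qed
    fix x y assume "x \<in> cball ub r" "y \<in> cball ub r"
    then have "x \<in> M" "y \<in> M" using ball by auto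
    then show "dist (G x) (G y) \<le> 1/3 * dist x y" using Gl by (simp add: dist_norm)
  qed auto
  then obtain x where x: "x \<in> cball ub r" "G x = x" by blast
  then have "Ai (f x) = 0" by (simp add: G_def)
  then have "f x = 0" using AAi[of "f x"] by simp
  moreover have "x = y" if "x\<in>M" "y\<in>M" "f x = 0" "f y = 0" for x y
  proof -
    have "c * norm (x - y) \<le> c/3 * norm (x - y)"
      using low[of "x-y"] mvt[OF that(1,2)] that(3,4) by simp
    moreover have "norm (x - y) > 0 \<Longrightarrow> c/3 * norm (x - y) < c * norm (x - y)"
      using c by (intro mult_strict_right_mono) auto
    ultimately have "norm (x - y) = 0" by (meson linorder_not_le norm_ge_zero order.antisym)
    then show ?thesis by simp
  qed
  ultimately show ?thesis using x by blast
qed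

theorem corollary2p3:
  fixes F :: "real \<Rightarrow> 'u::banach \<Rightarrow> 'v::banach"
    and F' :: "real \<Rightarrow> 'u \<Rightarrow> ('u \<Rightarrow>\<^sub>L 'v)"
    and ubar :: "real \<Rightarrow> 'u"
    and u0 :: 'u
    and N :: "'u \<Rightarrow> real"
    and \<epsilon>0 c d :: real
  assumes C1_deriv: "\<And>\<epsilon> u. \<epsilon> > 0 \<Longrightarrow> (F \<epsilon> has_derivative blinfun_apply (F' \<epsilon> u)) (at u)"
    and C1_cont: "\<And>\<epsilon>. \<epsilon> > 0 \<Longrightarrow> continuous_on UNIV (F' \<epsilon>)"
    and residual: "((\<lambda>\<epsilon>. norm (F \<epsilon> (ubar \<epsilon>))) \<longlongrightarrow> 0) (at_right 0)"
    and \<epsilon>0_pos: "\<epsilon>0 > 0" and c_pos: "c > 0"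
    and fred: "\<And>\<epsilon>. 0 < \<epsilon> \<Longrightarrow> \<epsilon> \<le> \<epsilon>0 \<Longrightarrow> fredholm_index_zero (blinfun_apply (F' \<epsilon> u0))"
    and lower: "\<And>\<epsilon> u. 0 < \<epsilon> \<Longrightarrow> \<epsilon> \<le> \<epsilon>0 \<Longrightarrow> norm (F' \<epsilon> u0 u) \<ge> c * norm u"
    and N_norm: "is_norm N"
    and d_finite: "bdd_above (N ` cball 0 1)"
    and d_def: "d = (SUP u\<in>cball 0 1. N u)"
    and ubar_conv: "((\<lambda>\<epsilon>. N (ubar \<epsilon> - u0)) \<longlongrightarrow> 0) (at_right 0)"
    and deriv_cont: "\<And>\<eta>. \<eta> > 0 \<Longrightarrow> \<exists>\<rho>>0. \<forall>\<epsilon> u. 0 < \<epsilon> \<and> \<epsilon> + N u < \<rho> \<longrightarrow>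
                        norm (F' \<epsilon> (u0 + u) - F' \<epsilon> u0) < \<eta>"
  shows "\<exists>\<epsilon>1 \<delta>. 0 < \<epsilon>1 \<and> \<epsilon>1 \<le> \<epsilon>0 \<and> \<delta> > 0 \<and>
           (\<forall>\<epsilon>. 0 < \<epsilon> \<and> \<epsilon> \<le> \<epsilon>1 \<longrightarrow>
              (\<exists>!u. F \<epsilon> u = 0 \<and> N (u - u0) \<le> \<delta>) \<and>
              (\<forall>u. F \<epsilon> u = 0 \<and> N (u - u0) \<le> \<delta> \<longrightarrow>
                 N (u - u0) \<le> N (ubar \<epsilon> - u0) + 3 * d / c * norm (F \<epsilon> (ubar \<epsilon>))))"
proof -
  have Nnn: "\<And>x. 0 \<le> N x" and N0: "\<And>x. N x = 0 \<longleftrightarrow> x = 0"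
    and Ntri: "\<And>x y. N (x + y) \<le> N x + N y" and Nsc: "\<And>a x. N (a *\<^sub>R x) = \<bar>a\<bar> * N x"
    using N_norm unfolding is_norm_def by blast+
  have Nle: "N x \<le> d * norm x" for x
  proof (cases "x = 0")
    case True then show ?thesis using N0[of 0] by simp
  next
    case False
    then have nx: "norm x > 0" by simp
    have "(1/norm x) *\<^sub>R x \<in> cball 0 1" by simp
    then have "N ((1/norm x) *\<^sub>R x) \<le> d"
      unfolding d_def by (rule cSUP_upper[OF _ d_finite])
    then have "N x / norm x \<le> d" using Nsc[of "1/norm x" x] nx by simp
    then show ?thesis using nx by (simp add: field_simps)
  qed
  have "N 0 \<le> d" unfolding d_def by (rule cSUP_upper[OF _ d_finite]) simp
  then have d0: "d \<ge> 0" using N0[of 0] by simp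
  obtain \<rho> where \<rho>: "\<rho> > 0" "\<forall>\<epsilon> u. 0 < \<epsilon> \<and> \<epsilon> + N u < \<rho> \<longrightarrow> norm (F' \<epsilon> (u0 + u) - F' \<epsilon> u0) < c/3"
    using deriv_cont[of "c/3"] c_pos by auto
  define \<delta> where "\<delta> = \<rho>/2"
  have \<delta>0: "\<delta> > 0" using \<rho> by (simp add: \<delta>_def)
  have e1: "\<delta>*c/(3*(d+1)) > 0" using \<delta>0 c_pos d0 by simp
  have ev1: "eventually (\<lambda>\<epsilon>. norm (F \<epsilon> (ubar \<epsilon>)) < \<delta>*c/(3*(d+1))) (at_right 0)"
    using order_tendstoD(2)[OF residual e1] .
  have ev2: "eventually (\<lambda>\<epsilon>. N (ubar \<epsilon> - u0) < \<delta>/2) (at_right 0)"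
    using order_tendstoD(2)[OF ubar_conv, of "\<delta>/2"] \<delta>0 by simp
  obtain b where b: "b > 0" "\<And>y. 0 < y \<Longrightarrow> y < b \<Longrightarrow>
      norm (F y (ubar y)) < \<delta>*c/(3*(d+1)) \<and> N (ubar y - u0) < \<delta>/2"
    using eventually_conj[OF ev1 ev2] unfolding eventually_at_right_field by auto
  define \<epsilon>1 where "\<epsilon>1 = min \<epsilon>0 (min (b/2) (\<rho>/4))"
  show ?thesis
  proof (rule exI[of _ \<epsilon>1], rule exI[of _ \<delta>], intro conjI allI impI)
    show "0 < \<epsilon>1" using \<epsilon>0_pos b \<rho> by (simp add: \<epsilon>1_def)
    show "\<epsilon>1 \<le> \<epsilon>0" by (simp add: \<epsilon>1_def)
    show "\<delta> > 0" by (rule \<delta>0)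
    fix \<epsilon> assume \<epsilon>: "0 < \<epsilon> \<and> \<epsilon> \<le> \<epsilon>1"
    then have \<epsilon>b: "\<epsilon> < b" and \<epsilon>\<rho>: "\<epsilon> \<le> \<rho>/4" and \<epsilon>0': "\<epsilon> \<le> \<epsilon>0" and \<epsilon>p: "0 < \<epsilon>"
      using b \<rho> by (auto simp: \<epsilon>1_def)
    define ub where "ub = ubar \<epsilon>"
    define nF where "nF = norm (F \<epsilon> ub)"
    define r where "r = 3 * nF / (2*c)"
    define M where "M = {w. N (w - u0) \<le> \<delta>}"
    have bF: "nF < \<delta>*c/(3*(d+1))" and bN: "N (ub - u0) < \<delta>/2"
      using b(2)[OF \<epsilon>p \<epsilon>b] by (auto simp: nF_def ub_def)
    have nF0: "nF \<ge> 0" by (simp add: nF_def)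
    have "nF * (3*(d+1)) < \<delta>*c" using bF d0 by (simp add: field_simps)
    moreover have "d * nF * 3 \<le> nF * (3*(d+1))" using nF0 by (simp add: algebra_simps)
    ultimately have "d * nF * 3 \<le> \<delta> * c" by linarith
    then have dr: "d * r \<le> \<delta>/2" using c_pos by (simp add: r_def field_simps)
    have cvx: "convex M"
      unfolding convex_def M_def
    proof (intro ballI allI impI, clarsimp)
      fix x y :: 'u and u v :: real
      assume x: "N (x - u0) \<le> \<delta>" and y: "N (y - u0) \<le> \<delta>" and u: "0 \<le> u" and v: "0 \<le> v" and uv: "u + v = 1"
      have e: "u *\<^sub>R (x - u0) + v *\<^sub>R (y - u0) = u *\<^sub>R x + v *\<^sub>R y - (u + v) *\<^sub>R u0"
        by (simp add: scaleR_diff_right scaleR_add_left)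
      have "u *\<^sub>R x + v *\<^sub>R y - u0 = u *\<^sub>R (x - u0) + v *\<^sub>R (y - u0)"
        unfolding e uv by simp
      then have "N (u *\<^sub>R x + v *\<^sub>R y - u0) \<le> u * N (x - u0) + v * N (y - u0)"
        using Ntri[of "u *\<^sub>R (x - u0)" "v *\<^sub>R (y - u0)"] Nsc u v by simp
      also have "\<dots> \<le> u * \<delta> + v * \<delta>" using x y u v by (intro add_mono mult_left_mono) auto
      also have "u * \<delta> + v * \<delta> = \<delta>" using uv by (metis distrib_right mult_1)
      finally show "N (u *\<^sub>R x + v *\<^sub>R y - u0) \<le> \<delta>" .
    qed
    have close: "norm (F' \<epsilon> w - F' \<epsilon> u0) \<le> c/3" if "w \<in> M" for w
    proof -
      have "\<epsilon> + N (w - u0) < \<rho>" using that \<epsilon>\<rho> \<rho>(1) by (simp add: M_def \<delta>_def)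
      then have "norm (F' \<epsilon> (u0 + (w - u0)) - F' \<epsilon> u0) < c/3" using \<rho>(2) \<epsilon>p by blast
      then show ?thesis by simp
    qed
    have ball: "cball ub r \<subseteq> M"
    proof
      fix w assume w: "w \<in> cball ub r"
      have "N (w - u0) \<le> N (w - ub) + N (ub - u0)" using Ntri[of "w - ub" "ub - u0"] by simp
      also have "N (w - ub) \<le> d * r"
      proof -
        have "norm (w - ub) \<le> r" using w by (simp add: dist_norm norm_minus_commute)
        then show ?thesis using Nle[of "w - ub"] d0 by (meson mult_left_mono order_trans)
      qed
      finally show "w \<in> M" using dr bN by (simp add: M_def)
    qed
    have surjA: "surj (blinfun_apply (F' \<epsilon> u0))"
      by (rule surj_lemma[OF fred[OF \<epsilon>p \<epsilon>0'] lower[OF \<epsilon>p \<epsilon>0'] c_pos])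
    have res: "(\<exists>x \<in> cball ub r. F \<epsilon> x = 0) \<and> (\<forall>x y. x\<in>M \<longrightarrow> y\<in>M \<longrightarrow> F \<epsilon> x = 0 \<longrightarrow> F \<epsilon> y = 0 \<longrightarrow> x = y)"
      by (rule core[OF C1_deriv[OF \<epsilon>p] surjA lower[OF \<epsilon>p \<epsilon>0'] c_pos cvx close ball])
        (auto simp: r_def nF_def)
    then obtain x where x: "x \<in> cball ub r" "F \<epsilon> x = 0" by blast
    have xM: "x \<in> M" using x ball by auto
    have uniq: "\<And>y. F \<epsilon> y = 0 \<and> N (y - u0) \<le> \<delta> \<Longrightarrow> y = x"
      using res xM x(2) by (auto simp: M_def)
    show "\<exists>!u. F \<epsilon> u = 0 \<and> N (u - u0) \<le> \<delta>"
      using x(2) xM uniq by (auto simp: M_def)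
    have est: "N (x - u0) \<le> N (ub - u0) + 3 * d / c * nF"
    proof -
      have "N (x - u0) \<le> N (x - ub) + N (ub - u0)" using Ntri[of "x - ub" "ub - u0"] by simp
      also have "N (x - ub) \<le> d * r"
      proof -
        have "norm (x - ub) \<le> r" using x(1) by (simp add: dist_norm norm_minus_commute)
        then show ?thesis using Nle[of "x - ub"] d0 by (meson mult_left_mono order_trans)
      qed
      also have "d * r \<le> 3 * d / c * nF" using d0 nF0 c_pos by (simp add: r_def field_simps)
      finally show ?thesis by simp
    qed
    fix u assume u: "F \<epsilon> u = 0 \<and> N (u - u0) \<le> \<delta>"
    then have "u = x" by (rule uniq)
    then show "N (u - u0) \<le> N (ubar \<epsilon> - u0) + 3 * d / c * norm (F \<epsilon> (ubar \<epsilon>))"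
      using est by (simp add: ub_def nF_def)
  qed
qed

end
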